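(* Let $n\ge2$, $q=2^m$, and let $\mathbf{H}_X^{(q)}$, $\mathbf{H}_Z^{(q)}$ be $q$-ary labelings of the toric Tanner graphs $\mathcal{G}_X$, $\mathcal{G}_Z$ (as defined in the context), with codes $\mathcal{C}_X^{(q)}$, $\mathcal{C}_Z^{(q)}$. If every cycle of the labeled graph $\mathcal{G}_X$ has product $1$ and $(\mathcal{C}_Z^{(q)})^\perp\subset\mathcal{C}_X^{(q)}$, then every cycle of the labeled graph $\mathcal{G}_Z$ has product $1$.
   Context: Indices are taken in $\mathbb{Z}_{2n}=\{0,\dots,2n-1\}$ with arithmetic mod $2n$. Variable nodes: $V=\{(i,j)\in\mathbb{Z}_{2n}^2: i+j\text{ even}\}$ ($2n^2$ nodes). $X$-check nodes: $C_X=\{(i,j): i\text{ odd}, j\text{ even}\}$; $Z$-check nodes: $C_Z=\{(i,j): i\text{ even}, j\text{ odd}\}$. Each check node $(i,j)$ is adjacent to the four variable nodes $(i\pm1,j)$, $(i,j\pm1)$. $\mathcal{G}_X$ is the bipartite graph on $V\cup C_X$ and $\mathcal{G}_Z$ on $V\cup C_Z$ (these are the Tanner graphs of the binary toric code). A $q$-ary labeling is a matrix $\mathbf{H}_X^{(q)}=(x_{c,v})\in\mathbb{F}_q^{C_X\times V}$ with $x_{c,v}\neq0$ iff $c$ and $v$ are adjacent, and similarly $\mathbf{H}_Z^{(q)}=(z_{c,v})\in\mathbb{F}_q^{C_Z\times V}$; the label of edge $(c,v)$ is $x_{c,v}$ (resp. $z_{c,v}$). $\mathcal{C}_X^{(q)}=\{w\in\mathbb{F}_q^V:\mathbf{H}_X^{(q)}w=0\}$,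 $\mathcal{C}_Z^{(q)}=\{w\in\mathbb{F}_q^V:\mathbf{H}_Z^{(q)}w=0\}$, and $\perp$ is with respect to the standard bilinear form on $\mathbb{F}_q^V$ (so $(\mathcal{C}_Z^{(q)})^\perp\subset\mathcal{C}_X^{(q)}$ iff $\mathbf{H}_X^{(q)}(\mathbf{H}_Z^{(q)})^T=0$). For a cycle $v_1,c_1,v_2,\dots,v_k,c_k,v_1$ in a labeled Tanner graph with labels $h_{c,v}$, its product is $\prod_{t=1}^k h_{c_t v_{t+1}}h_{c_t v_t}^{-1}$ (indices of $v$ mod $k$). *)

theory Defs
  imports Main
begin

text \<open>Indices in Z_{2n} are represented by naturals below 2n; nodes are pairs.\<close>

definition varN :: "nat \<Rightarrow> (nat \<times> nat) set" where
  "varN n = {(i,j). i < 2*n \<and> j < 2*n \<and> even (i+j)}"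

definition chkX :: "nat \<Rightarrow> (nat \<times> nat) set" where
  "chkX n = {(i,j). i < 2*n \<and> j < 2*n \<and> odd i \<and> even j}"

definition chkZ :: "nat \<Rightarrow> (nat \<times> nat) set" where
  "chkZ n = {(i,j). i < 2*n \<and> j < 2*n \<and> even i \<and> odd j}"

definition adj :: "nat \<Rightarrow> nat \<times> nat \<Rightarrow> nat \<times> nat \<Rightarrow> bool" where
  "adj n c v = (case c of (i,j) \<Rightarrow>
     v \<in> {((i+1) mod (2*n), j), ((i + 2*n - 1) mod (2*n), j),
           (i, (j+1) mod (2*n)), (i, (j + 2*n - 1) mod (2*n))})"

definition is_labeling :: "nat \<Rightarrow> (nat \<times> nat) set \<Rightarrow> (nat \<times> nat \<Rightarrow> nat \<times> nat \<Rightarrow> 'a::field) \<Rightarrow> bool" where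
  "is_labeling n C h = (\<forall>c\<in>C. \<forall>v\<in>varN n. (h c v \<noteq> 0 \<longleftrightarrow> adj n c v))"

definition vecs :: "nat \<Rightarrow> (nat \<times> nat \<Rightarrow> 'a::field) set" where
  "vecs n = {w. \<forall>v. v \<notin> varN n \<longrightarrow> w v = 0}"

definition code :: "nat \<Rightarrow> (nat \<times> nat) set \<Rightarrow> (nat \<times> nat \<Rightarrow> nat \<times> nat \<Rightarrow> 'a::field) \<Rightarrow> (nat \<times> nat \<Rightarrow> 'a) set" where
  "code n C h = {w \<in> vecs n. \<forall>c\<in>C. (\<Sum>v\<in>varN n. h c v * w v) = 0}"

definition perp :: "nat \<Rightarrow> (nat \<times> nat \<Rightarrow> 'a::field) set \<Rightarrow> (nat \<times> nat \<Rightarrow> 'a) set" where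
  "perp n S = {u \<in> vecs n. \<forall>w\<in>S. (\<Sum>v\<in>varN n. u v * w v) = 0}"

definition is_cycle :: "nat \<Rightarrow> (nat \<times> nat) set \<Rightarrow> (nat \<times> nat) list \<Rightarrow> (nat \<times> nat) list \<Rightarrow> bool" where
  "is_cycle n C vs cs = (length vs = length cs \<and> length vs \<ge> 2 \<and> distinct vs \<and> distinct cs \<and>
     set vs \<subseteq> varN n \<and> set cs \<subseteq> C \<and>
     (\<forall>t < length vs. adj n (cs!t) (vs!t) \<and> adj n (cs!t) (vs!((t+1) mod length vs))))"

definition cycle_product :: "(nat \<times> nat \<Rightarrow> nat \<times> nat \<Rightarrow> 'a::field) \<Rightarrow> (nat \<times> nat) list \<Rightarrow> (nat \<times> nat) list \<Rightarrow> 'a" where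
  "cycle_product h vs cs = (\<Prod>t < length vs. h (cs!t) (vs!((t+1) mod length vs)) * inverse (h (cs!t) (vs!t)))"

end

theory Submission
  imports Defs
begin

lemma char2: assumes "card (UNIV::'a::{finite,field} set) = 2^m" shows "(2::'a) = 0"
proof -
  have inj: "inj (\<lambda>x::'a. x + 1)" by (auto simp: inj_def)
  have surj: "range (\<lambda>x::'a. x + 1) = UNIV"
    by (metis UNIV_I diff_add_cancel surjI surj_def)
  have "(\<Sum>x\<in>UNIV. x) = (\<Sum>x\<in>range (\<lambda>x::'a. x+1). x)" using surj by simp
  also have "\<dots> = (\<Sum>x\<in>UNIV. x + 1)" using sum.reindex[OF inj, of id] by (simp add: comp_def)
  also have "\<dots> = (\<Sum>x\<in>UNIV. x) + of_nat (card (UNIV::'a set))" by (simp add: sum.distrib)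
  finally have "of_nat (card (UNIV::'a set)) = (0::'a)" by simp
  hence "(2::'a)^m = 0" using assms by simp
  thus ?thesis by simp
qed

lemma char2_eq: "(2::'a::field) = 0 \<Longrightarrow> x + y = 0 \<Longrightarrow> x = (y::'a)"
  by (metis add_right_cancel mult_2 mult_zero_left)

definition hn :: "nat \<Rightarrow> nat \<Rightarrow> nat \<Rightarrow> bool" where
  "hn n x y \<longleftrightarrow> y = (x+1) mod (2*n) \<or> y = (x + 2*n - 1) mod (2*n)"

lemma adj_iff: "adj n (i,j) v \<longleftrightarrow> (hn n i (fst v) \<and> snd v = j) \<or> (fst v = i \<and> hn n j (snd v))"
  by (cases v) (auto simp: adj_def hn_def)

lemma hn_sym: assumes "x < 2*n" "hn n x y" shows "hn n y x"
proof -
  consider "y = (x+1) mod (2*n)" | "y = (x + 2*n - 1) mod (2*n)" using assms by (auto simp: hn_def)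
  then show ?thesis
  proof cases
    case 1
    show ?thesis
    proof (cases "x + 1 < 2*n")
      case True then show ?thesis using 1 unfolding hn_def by auto
    next
      case False then have "x + 1 = 2*n" using assms(1) by auto
      then show ?thesis using 1 unfolding hn_def by auto
    qed
  next
    case 2
    then show ?thesis using assms(1) unfolding hn_def
      by (cases "x = 0") (auto simp: mod_if)
  qed
qed

lemma hn_lt: "x < 2*n \<Longrightarrow> hn n x y \<Longrightarrow> y < 2*n"
  by (auto simp: hn_def)

lemma hn_par: assumes "x < 2*n" "hn n x y" shows "even y \<longleftrightarrow> odd x"
proof -
  consider "y = (x+1) mod (2*n)" | "y = (x + 2*n - 1) mod (2*n)" using assms by (auto simp: hn_def)
  then show ?thesis
  proof cases
    case 1
    show ?thesis
    proof (cases "x + 1 < 2*n")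
      case True then show ?thesis using 1 by auto
    next
      case False then have "x + 1 = 2*n" using assms(1) by auto
      then show ?thesis using 1 by (auto; presburger)
    qed
  next
    case 2
    then show ?thesis using assms(1) by (cases "x = 0") (auto simp: mod_if)
  qed
qed

lemma adj_var: assumes "c \<in> chkX n \<union> chkZ n" "adj n c v" shows "v \<in> varN n"
proof -
  obtain i j where c: "c = (i,j)" by force
  show ?thesis using assms hn_lt[of i n "fst v"] hn_lt[of j n "snd v"]
      hn_par[of i n "fst v"] hn_par[of j n "snd v"]
    unfolding c adj_iff by (cases v) (auto simp: varN_def chkX_def chkZ_def)
qed

lemma common: assumes "c \<in> chkX n" "d \<in> chkZ n" "adj n c v" "adj n d v"
  shows "v = (fst d, snd c) \<or> v = (fst c, snd d)"
proof -
  obtain i j where c: "c = (i,j)" by force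
  obtain i' j' where d: "d = (i',j')" by force
  show ?thesis using assms unfolding c d adj_iff
    by (cases v) (auto simp: chkX_def chkZ_def)
qed

lemma shared: assumes "hn n i x" "hn n j y" "(i,j) \<in> chkZ n"
  shows "(x,y) \<in> chkX n \<and> adj n (x,y) (x,j) \<and> adj n (x,y) (i,y)"
  using assms hn_sym[of j n y] hn_sym[of i n x] hn_lt[of i n x] hn_lt[of j n y]
    hn_par[of i n x] hn_par[of j n y]
  by (auto simp: adj_iff chkX_def chkZ_def)


definition walk :: "nat \<Rightarrow> (nat\<times>nat) set \<Rightarrow> nat \<Rightarrow> (nat \<Rightarrow> nat\<times>nat) \<Rightarrow> (nat \<Rightarrow> nat\<times>nat) \<Rightarrow> bool" where
  "walk n C k V Cf \<longleftrightarrow> k \<ge> 1 \<and> V k = V 0 \<and>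
     (\<forall>t<k. Cf t \<in> C \<and> V t \<in> varN n \<and> adj n (Cf t) (V t) \<and> adj n (Cf t) (V (Suc t)))"

definition wprod :: "(nat\<times>nat \<Rightarrow> nat\<times>nat \<Rightarrow> 'a::field) \<Rightarrow> nat \<Rightarrow> (nat \<Rightarrow> nat\<times>nat) \<Rightarrow> (nat \<Rightarrow> nat\<times>nat) \<Rightarrow> 'a" where
  "wprod h k V Cf = (\<Prod>t<k. h (Cf t) (V (Suc t)) * inverse (h (Cf t) (V t)))"

lemma prod_split: "(\<Prod>t<a+b. f t) = (\<Prod>t<a. f t) * (\<Prod>t<b. f (a+t))" for f :: "nat \<Rightarrow> 'a::comm_monoid_mult"
  by (induction b) (auto simp: mult.assoc)

lemma prod_double: "(\<Prod>s<2*k. g s) = (\<Prod>t<k. g (2*t) * g (Suc (2*t)))" for g :: "nat \<Rightarrow> 'a::comm_monoid_mult"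
  by (induction k) (auto simp: mult.assoc)

lemma rot:
  assumes w: "walk n C k V Cf" and r: "r < k"
  shows "walk n C k (\<lambda>t. V ((t+r) mod k)) (\<lambda>t. Cf ((t+r) mod k)) \<and>
         wprod h k (\<lambda>t. V ((t+r) mod k)) (\<lambda>t. Cf ((t+r) mod k)) = wprod h k V Cf"
proof -
  have k0: "k > 0" using r by simp
  have VS: "V ((Suc t + r) mod k) = V (Suc ((t+r) mod k))" for t
  proof -
    have e: "(Suc t + r) mod k = Suc ((t+r) mod k) mod k" by (simp add: mod_Suc_eq)
    have "(t+r) mod k < k" using k0 by simp
    then consider "Suc ((t+r) mod k) < k" | "Suc ((t+r) mod k) = k" by linarith
    then show ?thesis
    proof cases
      case 1 then show ?thesis using e by simp
    next
      case 2 then show ?thesis using e w by (simp add: walk_def)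
    qed
  qed
  have w1: "walk n C k (\<lambda>t. V ((t+r) mod k)) (\<lambda>t. Cf ((t+r) mod k))"
    unfolding walk_def
  proof (intro conjI allI impI)
    show "1 \<le> k" using k0 by simp
    show "V ((k + r) mod k) = V ((0 + r) mod k)" by simp
  next
    fix t assume "t < k"
    have "(t+r) mod k < k" using k0 by simp
    then show "Cf ((t + r) mod k) \<in> C" "V ((t + r) mod k) \<in> varN n"
      "adj n (Cf ((t + r) mod k)) (V ((t + r) mod k))"
      "adj n (Cf ((t + r) mod k)) (V ((Suc t + r) mod k))"
      using w VS[of t] by (auto simp: walk_def)
  qed
  have inj: "inj_on (\<lambda>t. (t+r) mod k) {..<k}"
  proof (rule inj_onI)
    fix a b assume a: "a \<in> {..<k}" and b: "b \<in> {..<k}" and e: "(a+r) mod k = (b+r) mod k"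
    have m: "x < k \<Longrightarrow> (x+r) mod k = (if x+r<k then x+r else x+r-k)" for x
      using r by (simp add: mod_if)
    show "a = b" using e m[of a] m[of b] a b r by (auto split: if_splits)
  qed
  have bij: "bij_betw (\<lambda>t. (t+r) mod k) {..<k} {..<k}"
  proof -
    have sub: "(\<lambda>t. (t+r) mod k) ` {..<k} \<subseteq> {..<k}" using k0 by auto
    show ?thesis unfolding bij_betw_def using inj endo_inj_surj[OF finite_lessThan sub inj] by auto
  qed
  have "wprod h k (\<lambda>t. V ((t+r) mod k)) (\<lambda>t. Cf ((t+r) mod k)) =
     (\<Prod>t<k. (\<lambda>s. h (Cf s) (V (Suc s)) * inverse (h (Cf s) (V s))) ((t+r) mod k))"
    unfolding wprod_def using VS by simp
  also have "\<dots> = wprod h k V Cf"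
    unfolding wprod_def by (rule prod.reindex_bij_betw[OF bij])
  finally show ?thesis using w1 by simp
qed


lemma splitA:
  assumes w: "walk n C k V Cf" and j: "0 < j" "j < k" and e: "V j = V 0"
  shows "walk n C j V Cf \<and> walk n C (k-j) (\<lambda>t. V (j+t)) (\<lambda>t. Cf (j+t)) \<and>
    wprod h k V Cf = wprod h j V Cf * wprod h (k-j) (\<lambda>t. V (j+t)) (\<lambda>t. Cf (j+t))"
proof -
  have 1: "walk n C j V Cf" using w j e by (auto simp: walk_def)
  have 2: "walk n C (k-j) (\<lambda>t. V (j+t)) (\<lambda>t. Cf (j+t))" using w j e by (auto simp: walk_def)
  have "wprod h k V Cf = wprod h (j + (k-j)) V Cf" using j by simp
  also have "\<dots> = wprod h j V Cf * wprod h (k-j) (\<lambda>t. V (j+t)) (\<lambda>t. Cf (j+t))"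
    unfolding wprod_def by (subst prod_split) simp
  finally show ?thesis using 1 2 by simp
qed

lemma splitB:
  assumes w: "walk n C k V Cf" and j: "0 < j" "j < k" and e: "Cf j = Cf 0"
  shows "walk n C j (\<lambda>t. if t = j then V 1 else V (Suc t)) (\<lambda>t. if t < j - 1 then Cf (Suc t) else Cf 0) \<and>
    walk n C (k-j) (\<lambda>t. if t = k - j then V (Suc j) else V (Suc j + t)) (\<lambda>t. if t < k - j - 1 then Cf (Suc j + t) else Cf 0) \<and>
    wprod h k V Cf = wprod h j (\<lambda>t. if t = j then V 1 else V (Suc t)) (\<lambda>t. if t < j - 1 then Cf (Suc t) else Cf 0)
       * wprod h (k-j) (\<lambda>t. if t = k - j then V (Suc j) else V (Suc j + t)) (\<lambda>t. if t < k - j - 1 then Cf (Suc j + t) else Cf 0)"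
proof -
  let ?c = "Cf 0"
  have W: "\<And>t. t < k \<Longrightarrow> Cf t \<in> C \<and> V t \<in> varN n \<and> adj n (Cf t) (V t) \<and> adj n (Cf t) (V (Suc t))"
    and Vk: "V k = V 0" using w by (auto simp: walk_def)
  have 1: "walk n C j (\<lambda>t. if t = j then V 1 else V (Suc t)) (\<lambda>t. if t < j - 1 then Cf (Suc t) else Cf 0)"
    unfolding walk_def
  proof (intro conjI allI impI)
    fix t assume t: "t < j"
    show "(if t < j - 1 then Cf (Suc t) else Cf 0) \<in> C" using W[of "Suc t"] W[of 0] t j by auto
    show "(if t = j then V 1 else V (Suc t)) \<in> varN n" using W[of "Suc t"] W[of 0] t j Vk
      by (cases "Suc t = k") auto
    show "adj n (if t < j - 1 then Cf (Suc t) else Cf 0) (if t = j then V 1 else V (Suc t))"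
    proof (cases "t < j - 1")
      case True then show ?thesis using W[of "Suc t"] t j by auto
    next
      case False then have "Suc t = j" using t by auto
      then show ?thesis using W[of j] t j e by auto
    qed
    show "adj n (if t < j - 1 then Cf (Suc t) else Cf 0) (if Suc t = j then V 1 else V (Suc (Suc t)))"
      using W[of "Suc t"] W[of 0] t j by (cases "t < j - 1") auto
  qed (use j in auto)
  have 2: "walk n C (k-j) (\<lambda>t. if t = k - j then V (Suc j) else V (Suc j + t)) (\<lambda>t. if t < k - j - 1 then Cf (Suc j + t) else Cf 0)"
    unfolding walk_def
  proof (intro conjI allI impI)
    fix t assume t: "t < k - j"
    show "(if t < k - j - 1 then Cf (Suc j + t) else Cf 0) \<in> C" using W[of "Suc j + t"] W[of 0] t j by auto
    show "(if t = k - j then V (Suc j) else V (Suc j + t)) \<in> varN n" using W[of "Suc j + t"] W[of 0] t j Vk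
      by (cases "Suc j + t = k") auto
    show "adj n (if t < k - j - 1 then Cf (Suc j + t) else Cf 0) (if t = k - j then V (Suc j) else V (Suc j + t))"
    proof (cases "t < k - j - 1")
      case True then show ?thesis using W[of "Suc j + t"] t by auto
    next
      case False then have "Suc j + t = k" using t by auto
      then show ?thesis using W[of 0] t j Vk by auto
    qed
    show "adj n (if t < k - j - 1 then Cf (Suc j + t) else Cf 0) (if Suc t = k - j then V (Suc j) else V (Suc j + Suc t))"
    proof (cases "t < k - j - 1")
      case True then show ?thesis using W[of "Suc j + t"] t by auto
    next
      case False then have "Suc t = k - j" using t by auto
      then show ?thesis using W[of j] t j e by auto
    qed
  qed (use j Vk in auto)
  define f where "f t = h (Cf t) (V (Suc t)) * inverse (h (Cf t) (V t))" for t
  have A: "wprod h j (\<lambda>t. if t = j then V 1 else V (Suc t)) (\<lambda>t. if t < j - 1 then Cf (Suc t) else Cf 0)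
     = (\<Prod>t<j-1. f (Suc t)) * (h ?c (V 1) * inverse (h ?c (V j)))"
  proof -
    have "wprod h j (\<lambda>t. if t = j then V 1 else V (Suc t)) (\<lambda>t. if t < j - 1 then Cf (Suc t) else Cf 0)
      = wprod h (Suc (j-1)) (\<lambda>t. if t = j then V 1 else V (Suc t)) (\<lambda>t. if t < j - 1 then Cf (Suc t) else Cf 0)"
      using j by simp
    also have "\<dots> = (\<Prod>t<j-1. f (Suc t)) * (h ?c (V 1) * inverse (h ?c (V j)))"
      unfolding wprod_def prod.lessThan_Suc f_def using j
      by (auto intro!: prod.cong arg_cong2[where f="(*)"])
    finally show ?thesis .
  qed
  have B: "wprod h (k-j) (\<lambda>t. if t = k - j then V (Suc j) else V (Suc j + t)) (\<lambda>t. if t < k - j - 1 then Cf (Suc j + t) else Cf 0)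
     = (\<Prod>t<k-j-1. f (Suc j + t)) * (h ?c (V (Suc j)) * inverse (h ?c (V 0)))"
  proof -
    have "wprod h (k-j) (\<lambda>t. if t = k - j then V (Suc j) else V (Suc j + t)) (\<lambda>t. if t < k - j - 1 then Cf (Suc j + t) else Cf 0)
      = wprod h (Suc (k-j-1)) (\<lambda>t. if t = k - j then V (Suc j) else V (Suc j + t)) (\<lambda>t. if t < k - j - 1 then Cf (Suc j + t) else Cf 0)"
      using j by (simp add: Suc_diff_Suc)
    also have "\<dots> = (\<Prod>t<k-j-1. f (Suc j + t)) * (h ?c (V (Suc j)) * inverse (h ?c (V 0)))"
    proof -
      have "Suc j + (k - j - 1) = k" using j by simp
      then show ?thesis
        unfolding wprod_def prod.lessThan_Suc f_def using j Vk
        by (auto intro!: prod.cong arg_cong2[where f="(*)"])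
    qed
    finally show ?thesis .
  qed
  have p1: "(\<Prod>t<k. f t) = (\<Prod>t<j. f t) * (\<Prod>t<k-j. f (j+t))"
    using prod_split[of f j "k-j"] j by simp
  have p2: "(\<Prod>t<j. f t) = f 0 * (\<Prod>t<j-1. f (Suc t))"
    using prod_split[of f 1 "j-1"] j by simp
  have p3: "(\<Prod>t<k-j. f (j+t)) = f j * (\<Prod>t<k-j-1. f (Suc j + t))"
  proof -
    obtain m where m: "k - j = Suc m" using j by (metis Suc_diff_Suc)
    then have "k - j - 1 = m" by simp
    then show ?thesis unfolding m by (subst prod.lessThan_Suc_shift) simp
  qed
  have "wprod h k V Cf = (\<Prod>t<k. f t)"
    unfolding wprod_def f_def by simp
  also have "\<dots> = f 0 * (\<Prod>t<j-1. f (Suc t)) * (f j * (\<Prod>t<k-j-1. f (Suc j + t)))"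
    using p1 p2 p3 by simp
  also have "\<dots> = (\<Prod>t<j-1. f (Suc t)) * (h ?c (V 1) * inverse (h ?c (V j))) *
      ((\<Prod>t<k-j-1. f (Suc j + t)) * (h ?c (V (Suc j)) * inverse (h ?c (V 0))))"
    unfolding f_def using e by (simp add: ac_simps)
  finally show ?thesis using 1 2 A B by simp
qed


lemma walk_cycle:
  assumes w: "walk n C k V Cf" and k: "k \<ge> 2" and iv: "inj_on V {..<k}" and ic: "inj_on Cf {..<k}"
  shows "is_cycle n C (map V [0..<k]) (map Cf [0..<k]) \<and>
         cycle_product h (map V [0..<k]) (map Cf [0..<k]) = wprod h k V Cf"
proof -
  have W: "\<And>t. t < k \<Longrightarrow> Cf t \<in> C \<and> V t \<in> varN n \<and> adj n (Cf t) (V t) \<and> adj n (Cf t) (V (Suc t))"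
    and Vk: "V k = V 0" using w by (auto simp: walk_def)
  have S: "V (Suc t mod k) = V (Suc t)" if "t < k" for t
  proof (cases "Suc t < k")
    case True then show ?thesis by simp
  next
    case False then have "Suc t = k" using that by simp
    then show ?thesis using Vk by simp
  qed
  have "is_cycle n C (map V [0..<k]) (map Cf [0..<k])"
    unfolding is_cycle_def using k iv ic W S
    by (auto simp: distinct_map atLeast0LessThan)
  moreover have "cycle_product h (map V [0..<k]) (map Cf [0..<k]) = wprod h k V Cf"
    unfolding cycle_product_def wprod_def using k S
    by (auto intro!: prod.cong)
  ultimately show ?thesis by simp
qed

lemma walk_nz:
  assumes "is_labeling n C h" "walk n C k V Cf" "t < k"
  shows "h (Cf t) (V t) \<noteq> 0"
  using assms by (auto simp: is_labeling_def walk_def)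

lemma flat:
  assumes lab: "is_labeling n (chkX n) hX"
    and cyc: "\<forall>vs cs. is_cycle n (chkX n) vs cs \<longrightarrow> cycle_product hX vs cs = 1"
  shows "walk n (chkX n) k V Cf \<Longrightarrow> wprod hX k V Cf = 1"
proof (induction k arbitrary: V Cf rule: less_induct)
  case (less k V Cf)
  have w: "walk n (chkX n) k V Cf" by fact
  have k1: "k \<ge> 1" and Vk: "V k = V 0" using w by (auto simp: walk_def)
  show ?case
  proof (cases "k = 1")
    case True
    have "hX (Cf 0) (V 0) \<noteq> 0" using walk_nz[OF lab w] True by simp
    then show ?thesis using True Vk by (simp add: wprod_def)
  next
    case False
    then have k2: "k \<ge> 2" using k1 by simp
    show ?thesis
    proof (cases "\<exists>i j. i < j \<and> j \<le> k \<and> (i,j) \<noteq> (0,k) \<and> V i = V j")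
      case True
      then obtain i j where ij: "i < j" "j \<le> k" "(i,j) \<noteq> (0,k)" "V i = V j" by blast
      let ?V = "\<lambda>t. V ((t+i) mod k)" and ?C = "\<lambda>t. Cf ((t+i) mod k)"
      have ik: "i < k" using ij by simp
      from rot[OF w ik, of hX] have w': "walk n (chkX n) k ?V ?C" and p': "wprod hX k ?V ?C = wprod hX k V Cf" by auto
      have jk: "0 < j - i" "j - i < k" using ij by auto
      have e: "?V (j - i) = ?V 0"
      proof (cases "j = k")
        case True then show ?thesis using ij Vk by simp
      next
        case False then show ?thesis using ij by simp
      qed
      from splitA[OF w' jk e, of hX] less.IH[of "j-i"] less.IH[of "k-(j-i)"] jk
      show ?thesis using p' by auto
    next
      case nv: False
      have iv: "inj_on V {..<k}"
        by (rule inj_onI) (metis nv lessThan_iff linorder_neqE_nat nat_less_le prod.inject)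
      show ?thesis
      proof (cases "\<exists>i j. i < j \<and> j < k \<and> Cf i = Cf j")
        case True
        then obtain i j where ij: "i < j" "j < k" "Cf i = Cf j" by blast
        let ?V = "\<lambda>t. V ((t+i) mod k)" and ?C = "\<lambda>t. Cf ((t+i) mod k)"
        have ik: "i < k" using ij by simp
        from rot[OF w ik, of hX] have w': "walk n (chkX n) k ?V ?C" and p': "wprod hX k ?V ?C = wprod hX k V Cf" by auto
        have jk: "0 < j - i" "j - i < k" using ij by auto
        have e: "?C (j - i) = ?C 0" using ij by simp
        from splitB[OF w' jk e, of hX] less.IH[of "j-i"] less.IH[of "k-(j-i)"] jk
        show ?thesis using p' by auto
      next
        case False
        have ic: "inj_on Cf {..<k}"
          by (rule inj_onI) (metis False lessThan_iff linorder_neqE_nat)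
        from walk_cycle[OF w k2 iv ic, of hX] cyc show ?thesis by auto
      qed
    qed
  qed
qed


lemma finite_varN: "finite (varN n)"
  by (rule finite_subset[of _ "{..<2*n} \<times> {..<2*n}"]) (auto simp: varN_def)

lemma orth:
  assumes P: "perp n (code n (chkZ n) hZ) \<subseteq> code n (chkX n) hX"
    and c: "c \<in> chkX n" and d: "d \<in> chkZ n"
  shows "(\<Sum>v\<in>varN n. hX c v * hZ d v) = 0"
proof -
  define u where "u v = (if v \<in> varN n then hZ d v else 0)" for v
  have "u \<in> perp n (code n (chkZ n) hZ)"
    unfolding perp_def
  proof (intro CollectI conjI ballI)
    show "u \<in> vecs n" by (simp add: u_def vecs_def)
    fix w assume "w \<in> code n (chkZ n) hZ"
    then have "(\<Sum>v\<in>varN n. hZ d v * w v) = 0" using d by (auto simp: code_def)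
    then show "(\<Sum>v\<in>varN n. u v * w v) = 0" by (simp add: u_def)
  qed
  with P have "u \<in> code n (chkX n) hX" by blast
  then have "(\<Sum>v\<in>varN n. hX c v * u v) = 0" using c by (auto simp: code_def)
  then show ?thesis by (simp add: u_def)
qed

lemma pair:
  assumes labX: "is_labeling n (chkX n) hX" and labZ: "is_labeling n (chkZ n) hZ"
    and P: "perp n (code n (chkZ n) hZ) \<subseteq> code n (chkX n) hX"
    and two: "(2::'a::field) = 0"
    and c: "c \<in> chkX n" and d: "d \<in> chkZ n"
    and a: "adj n c a" "adj n d a" and b: "adj n c b" "adj n d b"
  shows "hX c a * hZ d a = hX c b * (hZ d b :: 'a)"
proof (cases "a = b")
  case True then show ?thesis by simp
next
  case ne: False
  have av: "a \<in> varN n" and bv: "b \<in> varN n" using adj_var[of c n a] adj_var[of c n b] a b c by auto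
  have z: "hX c v * hZ d v = 0" if "v \<in> varN n - {a,b}" for v
  proof (cases "adj n c v \<and> adj n d v")
    case True
    then have "v = (fst d, snd c) \<or> v = (fst c, snd d)" using common c d by blast
    moreover have "a = (fst d, snd c) \<or> a = (fst c, snd d)" using common c d a by blast
    moreover have "b = (fst d, snd c) \<or> b = (fst c, snd d)" using common c d b by blast
    ultimately have "v \<in> {a,b}" using ne by auto
    then show ?thesis using that by simp
  next
    case False
    then show ?thesis using labX labZ c d that by (auto simp: is_labeling_def)
  qed
  have "(\<Sum>v\<in>varN n. hX c v * hZ d v) = (\<Sum>v\<in>{a,b}. hX c v * hZ d v)"
    by (rule sum.mono_neutral_right[OF finite_varN]) (use av bv z in auto)
  also have "\<dots> = hX c a * hZ d a + hX c b * hZ d b" using ne by simp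
  finally have "hX c a * hZ d a + hX c b * hZ d b = 0" using orth[OF P c d] by simp
  then show ?thesis using char2_eq[OF two] by blast
qed

lemma zstep:
  assumes n: "n \<ge> 1" and d: "d \<in> chkZ n" and a: "adj n d a" and b: "adj n d b"
  shows "\<exists>u c1 c2. adj n d u \<and> c1 \<in> chkX n \<and> c2 \<in> chkX n \<and> adj n c1 a \<and> adj n c1 u \<and> adj n c2 u \<and> adj n c2 b"
proof -
  obtain i j where dij: "d = (i,j)" by force
  have dz: "(i,j) \<in> chkZ n" using d dij by simp
  define y0 where "y0 = (j+1) mod (2*n)"
  define x0 where "x0 = (i+1) mod (2*n)"
  have hy0: "hn n j y0" by (simp add: hn_def y0_def)
  have hx0: "hn n i x0" by (simp add: hn_def x0_def)
  from a consider (ah) x1 where "a = (x1, j)" "hn n i x1" | (av) y1 where "a = (i, y1)" "hn n j y1"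
    unfolding dij adj_iff by (cases a) auto
  then show ?thesis
  proof cases
    case ah
    from b consider (bh) x2 where "b = (x2, j)" "hn n i x2" | (bv) y2 where "b = (i, y2)" "hn n j y2"
      unfolding dij adj_iff by (cases b) auto
    then show ?thesis
    proof cases
      case bh
      have "adj n d (i,y0)" using hy0 by (simp add: dij adj_iff)
      then show ?thesis using shared[OF ah(2) hy0 dz] shared[OF bh(2) hy0 dz] ah bh by blast
    next
      case bv
      have "adj n d b" by fact
      then show ?thesis using shared[OF ah(2) bv(2) dz] ah bv by blast
    qed
  next
    case av
    from b consider (bh) x2 where "b = (x2, j)" "hn n i x2" | (bv) y2 where "b = (i, y2)" "hn n j y2"
      unfolding dij adj_iff by (cases b) auto
    then show ?thesis
    proof cases
      case bh
      have "adj n d b" by fact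
      then show ?thesis using shared[OF bh(2) av(2) dz] av bh by blast
    next
      case bv
      have "adj n d (x0,j)" using hx0 by (simp add: dij adj_iff)
      then show ?thesis using shared[OF hx0 av(2) dz] shared[OF hx0 bv(2) dz] av bv by blast
    qed
  qed
qed

lemma ratio:
  fixes x1a x1u x2u x2b za zu zb :: "'a::field"
  assumes "x1a \<noteq> 0" "x1u \<noteq> 0" "x2u \<noteq> 0" "x2b \<noteq> 0" "za \<noteq> 0" "zu \<noteq> 0" "zb \<noteq> 0"
    and "x1a * za = x1u * zu" "x2u * zu = x2b * zb"
  shows "zb * inverse za = inverse (x1u * inverse x1a * (x2b * inverse x2u))"
proof -
  have "zb = x2u * zu / x2b" using assms by (simp add: field_simps)
  moreover have "zu = x1a * za / x1u" using assms by (simp add: field_simps)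
  ultimately have "zb = x2u * x1a * za / (x2b * x1u)" by (simp add: ac_simps)
  then show ?thesis using assms by (simp add: field_simps)
qed


theorem lemma3:
  fixes n m :: nat
    and hX hZ :: "nat \<times> nat \<Rightarrow> nat \<times> nat \<Rightarrow> 'a::{finite,field}"
  assumes "n \<ge> 2"
    and "card (UNIV :: 'a set) = 2 ^ m"
    and "is_labeling n (chkX n) hX"
    and "is_labeling n (chkZ n) hZ"
    and "\<forall>vs cs. is_cycle n (chkX n) vs cs \<longrightarrow> cycle_product hX vs cs = 1"
    and "perp n (code n (chkZ n) hZ) \<subseteq> code n (chkX n) hX"
  shows "\<forall>vs cs. is_cycle n (chkZ n) vs cs \<longrightarrow> cycle_product hZ vs cs = 1"
proof (intro allI impI)
  note n = assms(1) and labX = assms(3) and labZ = assms(4) and cycX = assms(5) and P = assms(6)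
  have two: "(2::'a) = 0" using char2[OF assms(2)] .
  fix vs cs assume cy: "is_cycle n (chkZ n) vs cs"
  define k where "k = length vs"
  define V where "V t = vs ! (t mod k)" for t
  define D where "D t = cs ! t" for t
  have k2: "k \<ge> 2" and lc: "length cs = k" using cy by (auto simp: is_cycle_def k_def)
  have Vk: "V k = V 0" by (simp add: V_def)
  have Zs: "D t \<in> chkZ n \<and> V t \<in> varN n \<and> adj n (D t) (V t) \<and> adj n (D t) (V (Suc t))" if t: "t < k" for t
  proof -
    have "cs ! t \<in> set cs" "vs ! t \<in> set vs" using t lc k_def by auto
    moreover have "V t = vs ! t" using t by (simp add: V_def)
    moreover have "V (Suc t) = vs ! ((t+1) mod length vs)" by (simp add: V_def k_def)
    ultimately show ?thesis using cy t unfolding is_cycle_def D_def k_def by auto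
  qed
  have "\<forall>t. \<exists>p. t < k \<longrightarrow> (adj n (D t) (fst p) \<and> fst (snd p) \<in> chkX n \<and> snd (snd p) \<in> chkX n \<and>
      adj n (fst (snd p)) (V t) \<and> adj n (fst (snd p)) (fst p) \<and> adj n (snd (snd p)) (fst p) \<and>
      adj n (snd (snd p)) (V (Suc t)))"
  proof
    fix t
    show "\<exists>p. t < k \<longrightarrow> (adj n (D t) (fst p) \<and> fst (snd p) \<in> chkX n \<and> snd (snd p) \<in> chkX n \<and>
      adj n (fst (snd p)) (V t) \<and> adj n (fst (snd p)) (fst p) \<and> adj n (snd (snd p)) (fst p) \<and>
      adj n (snd (snd p)) (V (Suc t)))"
    proof (cases "t < k")
      case True
      have "1 \<le> n" using n by simp
      from zstep[OF this, of "D t" "V t" "V (Suc t)"] Zs[OF True] obtain u c1 c2 where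
        "adj n (D t) u \<and> c1 \<in> chkX n \<and> c2 \<in> chkX n \<and> adj n c1 (V t) \<and> adj n c1 u \<and> adj n c2 u \<and> adj n c2 (V (Suc t))"
        by blast
      then show ?thesis by (intro exI[of _ "(u,c1,c2)"]) simp
    qed simp
  qed
  then obtain g where g: "\<And>t. t < k \<Longrightarrow> adj n (D t) (fst (g t)) \<and> fst (snd (g t)) \<in> chkX n \<and> snd (snd (g t)) \<in> chkX n \<and>
      adj n (fst (snd (g t))) (V t) \<and> adj n (fst (snd (g t))) (fst (g t)) \<and> adj n (snd (snd (g t))) (fst (g t)) \<and>
      adj n (snd (snd (g t))) (V (Suc t))"
    by (metis choice)
  define U where "U t = fst (g t)" for t
  define C1 where "C1 t = fst (snd (g t))" for t
  define C2 where "C2 t = snd (snd (g t))" for t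
  have G: "adj n (D t) (U t) \<and> C1 t \<in> chkX n \<and> C2 t \<in> chkX n \<and> adj n (C1 t) (V t) \<and> adj n (C1 t) (U t)
      \<and> adj n (C2 t) (U t) \<and> adj n (C2 t) (V (Suc t))" if "t < k" for t
    using g[OF that] by (simp add: U_def C1_def C2_def)
  define xr where "xr t = hX (C1 t) (U t) * inverse (hX (C1 t) (V t)) * (hX (C2 t) (V (Suc t)) * inverse (hX (C2 t) (U t)))" for t
  have R: "hZ (D t) (V (Suc t)) * inverse (hZ (D t) (V t)) = inverse (xr t)" if t: "t < k" for t
  proof -
    have d: "D t \<in> chkZ n" and va: "V t \<in> varN n" and a: "adj n (D t) (V t)" and b: "adj n (D t) (V (Suc t))"
      using Zs[OF t] by auto
    have G': "adj n (D t) (U t)" "C1 t \<in> chkX n" "C2 t \<in> chkX n" "adj n (C1 t) (V t)" "adj n (C1 t) (U t)"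
      "adj n (C2 t) (U t)" "adj n (C2 t) (V (Suc t))" using G[OF t] by auto
    have uv: "U t \<in> varN n" using adj_var[of "D t" n "U t"] d G' by auto
    have bv: "V (Suc t) \<in> varN n" using adj_var[of "D t" n "V (Suc t)"] d b by auto
    have e1: "hX (C1 t) (V t) * hZ (D t) (V t) = hX (C1 t) (U t) * hZ (D t) (U t)"
      by (rule pair[OF labX labZ P two G'(2) d G'(4) a G'(5) G'(1)])
    have e2: "hX (C2 t) (U t) * hZ (D t) (U t) = hX (C2 t) (V (Suc t)) * hZ (D t) (V (Suc t))"
      by (rule pair[OF labX labZ P two G'(3) d G'(6) G'(1) G'(7) b])
    have nz: "hX (C1 t) (V t) \<noteq> 0" "hX (C1 t) (U t) \<noteq> 0" "hX (C2 t) (U t) \<noteq> 0" "hX (C2 t) (V (Suc t)) \<noteq> 0"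
      "hZ (D t) (V t) \<noteq> 0" "hZ (D t) (U t) \<noteq> 0" "hZ (D t) (V (Suc t)) \<noteq> 0"
      using labX labZ G' d a b va uv bv by (auto simp: is_labeling_def)
    show ?thesis unfolding xr_def by (rule ratio[OF nz e1 e2])
  qed
  define VX where "VX s = (if even s then V (s div 2) else U (s div 2))" for s
  define CX where "CX s = (if even s then C1 (s div 2) else C2 (s div 2))" for s
  have wX: "walk n (chkX n) (2*k) VX CX"
    unfolding walk_def
  proof (intro conjI allI impI)
    show "1 \<le> 2*k" using k2 by simp
    show "VX (2*k) = VX 0" using Vk by (simp add: VX_def)
  next
    fix s assume s: "s < 2*k"
    have t: "s div 2 < k" using s by simp
    have uv: "U (s div 2) \<in> varN n" using adj_var[of "D (s div 2)" n "U (s div 2)"] Zs[OF t] G[OF t] by auto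
    have sd: "odd s \<Longrightarrow> Suc s div 2 = Suc (s div 2)" by presburger
    have sd2: "even s \<Longrightarrow> Suc s div 2 = s div 2" by presburger
    show "CX s \<in> chkX n" "VX s \<in> varN n" "adj n (CX s) (VX s)" "adj n (CX s) (VX (Suc s))"
      using G[OF t] Zs[OF t] uv sd sd2 by (auto simp: CX_def VX_def)
  qed
  have "wprod hX (2*k) VX CX = (\<Prod>t<k. xr t)"
    unfolding wprod_def prod_double
  proof (rule prod.cong)
    fix t assume "t \<in> {..<k}"
    have a: "Suc (Suc (2*t)) div 2 = Suc t" by presburger
    show "hX (CX (2 * t)) (VX (Suc (2 * t))) * inverse (hX (CX (2 * t)) (VX (2 * t))) *
        (hX (CX (Suc (2 * t))) (VX (Suc (Suc (2 * t)))) * inverse (hX (CX (Suc (2 * t))) (VX (Suc (2 * t))))) = xr t"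
      by (simp add: CX_def VX_def xr_def a)
  qed simp
  moreover have "wprod hX (2*k) VX CX = 1" by (rule flat[OF labX cycX wX])
  ultimately have px: "(\<Prod>t<k. xr t) = 1" by simp
  have "cycle_product hZ vs cs = (\<Prod>t<k. hZ (D t) (V (Suc t)) * inverse (hZ (D t) (V t)))"
    unfolding cycle_product_def k_def[symmetric]
    by (rule prod.cong) (auto simp: V_def D_def k_def)
  also have "\<dots> = (\<Prod>t<k. inverse (xr t))" by (rule prod.cong) (auto simp: R)
  also have "\<dots> = inverse (\<Prod>t<k. xr t)" using prod_inversef[of xr "{..<k}"] by (simp add: comp_def)
  also have "\<dots> = 1" using px by simp
  finally show "cycle_product hZ vs cs = 1" .
qed

end
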